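(* For every integer $r\geq1$, $$\sum_{i=1}^{r-1}\frac{(uv)^{2r-2i}-1}{(uv)^2-1}\,e_{2i}\,g_{2i,2r+1}=\frac{((uv)^{2r}-1)((uv)^{2r^2-r-1}-1)}{((uv)^2-1)(uv-1)}.$$
   Context: $e_{2i}=e_{2i}(u,v)$ is the Hodge–Deligne polynomial of the variety of nondegenerate skew forms on $\mathbb{C}^{2i}$ up to scaling; $g_{k,n}=g_{k,n}(u,v)$ is the Hodge–Deligne polynomial of the Grassmannian $G(k,n)$. An empty sum is $0$. *)

theory Defs
  imports Complex_Main
begin

(* It equals the point count of G(k,n) over F_q, and the Hodge-Deligne
   polynomial of G(k,n) is this polynomial evaluated at q = uv. *)
fun gauss_binom :: "nat \<Rightarrow> nat \<Rightarrow> 'a::comm_ring_1 \<Rightarrow> 'a" where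
  "gauss_binom 0 n q = 1"
| "gauss_binom (Suc k) 0 q = 0"
| "gauss_binom (Suc k) (Suc n) q = gauss_binom k n q + q ^ Suc k * gauss_binom (Suc k) n q"

definition hd_grass :: "nat \<Rightarrow> nat \<Rightarrow> complex \<Rightarrow> complex \<Rightarrow> complex" where
  "hd_grass k n u v = gauss_binom k n (u * v)"

(* e_{2i}(u,v): Hodge-Deligne polynomial of the variety of nondegenerate skew forms on
   C^{2i} up to scaling, i.e. of GL_{2i}/(Sp_{2i} * C^* ).  With q = uv it equals
   |GL_{2i}(F_q)| / (|Sp_{2i}(F_q)| (q-1)) = q^{i(i-1)} * prod_{j=2..i} (q^{2j-1} - 1).
   The argument m is the dimension 2i (used only for even m). *)
definition hd_skew :: "nat \<Rightarrow> complex \<Rightarrow> complex \<Rightarrow> complex" where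
  "hd_skew m u v = (let i = m div 2; q = u * v in
      q ^ (i * (i - 1)) * (\<Prod>j = 2..i. q ^ (2 * j - 1) - 1))"

end

theory Submission
  imports Defs
begin

lemma gb_zero: "n < k \<Longrightarrow> gauss_binom k n (q::'a::comm_ring_1) = 0"
proof (induction n arbitrary: k)
  case 0 then show ?case by (cases k) auto
next
  case (Suc n) then show ?case by (cases k) auto
qed

lemma gb_ratio: "(q ^ Suc k - 1) * gauss_binom (Suc k) n q = (q ^ (n - k) - 1) * gauss_binom k n (q::'a::comm_ring_1)"
proof (induction n arbitrary: k)
  case 0 then show ?case by simp
next
  case (Suc n)
  show ?case
  proof (cases k)
    case 0
    have "(q - 1) * gauss_binom 1 n q = q ^ n - 1" using Suc.IH[of 0] by simp
    then show ?thesis using 0 by (simp add: algebra_simps)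
  next
    case (Suc k')
    have IH1: "(q ^ Suc (Suc k') - 1) * gauss_binom (Suc (Suc k')) n q = (q ^ (n - Suc k') - 1) * gauss_binom (Suc k') n q"
      using Suc.IH[of "Suc k'"] .
    show ?thesis
    proof (cases "n < Suc k'")
      case True
      then have "gauss_binom (Suc k') n q = 0" by (rule gb_zero)
      moreover have "gauss_binom (Suc (Suc k')) n q = 0" using True by (intro gb_zero) simp
      moreover have "Suc n - k' = 1 \<or> Suc n - k' = 0 \<or> n < k'" using True by auto
      moreover have "n < k' \<Longrightarrow> gauss_binom k' n q = 0" by (rule gb_zero)
      ultimately show ?thesis using Suc \<open>n < Suc k'\<close> 
        by (cases "n = k'") (auto simp: algebra_simps)
    next
      case False
      then obtain m where m: "n = Suc k' + m" by (metis le_iff_add not_less)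
      have IH0: "(q ^ Suc k' - 1) * gauss_binom (Suc k') n q = (q ^ (n - k') - 1) * gauss_binom k' n q"
        using Suc.IH[of k'] .
      have e1: "n - Suc k' = m" "n - k' = Suc m" "Suc n - Suc k' = Suc m" using m by auto
      have "(q ^ Suc (Suc k') - 1) * gauss_binom (Suc (Suc k')) (Suc n) q
          = (q ^ Suc (Suc k') - 1) * gauss_binom (Suc k') n q + q ^ Suc (Suc k') * ((q ^ Suc (Suc k') - 1) * gauss_binom (Suc (Suc k')) n q)"
        by (simp add: algebra_simps)
      also have "\<dots> = (q ^ Suc (Suc k') - 1 + q ^ Suc (Suc k') * (q ^ m - 1)) * gauss_binom (Suc k') n q"
        by (subst IH1) (simp add: e1 algebra_simps)
      also have "\<dots> = (q ^ Suc k' - 1 + q ^ Suc k' * (q ^ Suc m - 1)) * gauss_binom (Suc k') n q"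
        by (simp add: algebra_simps)
      also have "\<dots> = (q ^ Suc m - 1) * gauss_binom k' n q + q ^ Suc k' * (q ^ Suc m - 1) * gauss_binom (Suc k') n q"
        using IH0 e1 by (subst (asm) e1(2)) (metis (no_types, lifting) distrib_right mult.assoc)
      also have "\<dots> = (q ^ (Suc n - k) - 1) * gauss_binom k (Suc n) q"
        using Suc e1 by (simp add: algebra_simps)
      finally show ?thesis using Suc by simp
    qed
  qed
qed

definition PP :: "complex \<Rightarrow> nat \<Rightarrow> complex" where
  "PP q i = q ^ (i * (i - 1)) * (\<Prod>j = 1..i. q ^ (2 * j - 1) - 1)"

definition TT :: "complex \<Rightarrow> nat \<Rightarrow> nat \<Rightarrow> complex" where
  "TT q N i = PP q i * gauss_binom (2 * i) N q"

lemma PP_Suc: "PP q (Suc i) = PP q i * q ^ (2 * i) * (q ^ (2 * i + 1) - 1)"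
proof -
  have e: "Suc i * (Suc i - 1) = i * (i - 1) + 2 * i" by (cases i) auto
  have p: "(\<Prod>j = 1..Suc i. q ^ (2 * j - 1) - 1) = (\<Prod>j = 1..i. q ^ (2 * j - 1) - 1) * (q ^ (2 * i + 1) - 1)"
    by simp
  show ?thesis unfolding PP_def e p by (simp add: power_add mult.assoc mult.left_commute)
qed

lemma TT0: "TT q N 0 = 1" by (simp add: TT_def PP_def)

lemma TT_zero: "N < 2 * i \<Longrightarrow> TT q N i = 0" by (simp add: TT_def gb_zero)

lemma TT_rec: "TT q (Suc N) (Suc i) = q ^ (2 * i + 2) * TT q N (Suc i) + (q ^ N - q ^ (2 * i)) * TT q N i"
proof -
  have g: "gauss_binom (2 * Suc i) (Suc N) q = gauss_binom (Suc (2 * i)) N q + q ^ (2 * i + 2) * gauss_binom (2 * Suc i) N q"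
    by (simp add: mult_2)
  have key: "PP q (Suc i) * gauss_binom (Suc (2 * i)) N q = (q ^ N - q ^ (2 * i)) * TT q N i"
  proof (cases "N < 2 * i")
    case True
    then show ?thesis by (simp add: gb_zero TT_zero)
  next
    case False
    have r: "(q ^ Suc (2*i) - 1) * gauss_binom (Suc (2*i)) N q = (q ^ (N - 2*i) - 1) * gauss_binom (2*i) N q"
      by (rule gb_ratio)
    have pw: "q ^ (2 * i) * (q ^ (N - 2*i) - 1) = q ^ N - q ^ (2 * i)"
      using False by (simp add: right_diff_distrib flip: power_add)
    have "PP q (Suc i) * gauss_binom (Suc (2 * i)) N q = PP q i * q ^ (2 * i) * ((q ^ Suc (2*i) - 1) * gauss_binom (Suc (2*i)) N q)"
      by (simp add: PP_Suc)
    also have "\<dots> = PP q i * (q ^ (2 * i) * (q ^ (N - 2*i) - 1)) * gauss_binom (2*i) N q"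
      by (simp only: r) (simp add: algebra_simps)
    also have "\<dots> = (q ^ N - q ^ (2 * i)) * TT q N i" by (simp only: pw) (simp add: TT_def)
    finally show ?thesis .
  qed
  show ?thesis unfolding TT_def[of q "Suc N"] g using key
    by (simp add: TT_def algebra_simps)
qed

definition S0 :: "complex \<Rightarrow> nat \<Rightarrow> complex" where
  "S0 q N = (\<Sum>i\<le>N. TT q N i)"

definition W :: "complex \<Rightarrow> nat \<Rightarrow> complex" where
  "W q N = (\<Sum>i\<le>N. q ^ (2 * (N - i)) * TT q N i)"

lemma shift_q2: "(\<Sum>i\<le>N. q ^ (2 * i + 2) * TT q N (Suc i)) = (\<Sum>i\<le>N. q ^ (2 * i) * TT q N i) - 1"
proof -
  have A: "(\<Sum>i\<le>Suc N. q ^ (2 * i) * TT q N i) = 1 + (\<Sum>i\<le>N. q ^ (2 * i + 2) * TT q N (Suc i))"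
    by (subst sum.atMost_Suc_shift) (simp add: TT0 mult_2)
  have "TT q N (Suc N) = 0" by (rule TT_zero) simp
  then have B: "(\<Sum>i\<le>Suc N. q ^ (2 * i) * TT q N i) = (\<Sum>i\<le>N. q ^ (2 * i) * TT q N i)"
    by simp
  show ?thesis by (metis A B add_diff_cancel_left')
qed

lemma shift_1: "(\<Sum>i\<le>N. TT q N (Suc i)) = S0 q N - 1"
proof -
  have A: "(\<Sum>i\<le>Suc N. TT q N i) = 1 + (\<Sum>i\<le>N. TT q N (Suc i))"
    by (subst sum.atMost_Suc_shift) (simp add: TT0)
  have "TT q N (Suc N) = 0" by (rule TT_zero) simp
  then have B: "(\<Sum>i\<le>Suc N. TT q N i) = S0 q N"
    by (simp add: S0_def)
  show ?thesis by (metis A B add_diff_cancel_left')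
qed

lemma S0_Suc: "S0 q (Suc N) = q ^ N * S0 q N"
proof -
  have "S0 q (Suc N) = 1 + (\<Sum>i\<le>N. TT q (Suc N) (Suc i))"
    unfolding S0_def by (subst sum.atMost_Suc_shift) (simp add: TT0)
  also have "\<dots> = 1 + (\<Sum>i\<le>N. q ^ (2 * i + 2) * TT q N (Suc i)) + (\<Sum>i\<le>N. q ^ N * TT q N i) - (\<Sum>i\<le>N. q ^ (2 * i) * TT q N i)"
    by (simp add: TT_rec sum.distrib sum_subtractf left_diff_distrib)
  also have "\<dots> = q ^ N * S0 q N"
    unfolding shift_q2 by (simp add: S0_def sum_distrib_left)
  finally show ?thesis .
qed

lemma W_Suc: "W q (Suc N) = q ^ (2 * N + 2) * S0 q N + q ^ N * W q N - q ^ (2 * N) * S0 q N"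
proof -
  have "W q (Suc N) = q ^ (2 * N + 2) + (\<Sum>i\<le>N. q ^ (2 * (N - i)) * TT q (Suc N) (Suc i))"
    unfolding W_def by (subst sum.atMost_Suc_shift) (simp add: TT0)
  also have "(\<Sum>i\<le>N. q ^ (2 * (N - i)) * TT q (Suc N) (Suc i))
     = (\<Sum>i\<le>N. q ^ (2 * N + 2) * TT q N (Suc i) + q ^ N * (q ^ (2 * (N - i)) * TT q N i) - q ^ (2 * N) * TT q N i)"
  proof (rule sum.cong[OF refl])
    fix i assume "i \<in> {..N}"
    then have "i \<le> N" by simp
    then have a: "q ^ (2 * (N - i)) * q ^ (2 * i + 2) = q ^ (2 * N + 2)"
      and b: "q ^ (2 * (N - i)) * q ^ (2 * i) = q ^ (2 * N)"
      by (simp_all only: power_add[symmetric]; simp add: \<open>i \<le> N\<close> algebra_simps)+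
    show "q ^ (2 * (N - i)) * TT q (Suc N) (Suc i) = q ^ (2 * N + 2) * TT q N (Suc i) + q ^ N * (q ^ (2 * (N - i)) * TT q N i) - q ^ (2 * N) * TT q N i"
    proof -
      have c: "q^(2*(N-i)) * TT q (Suc N) (Suc i) = q^(2*(N-i)) * q^(2*i+2) * TT q N (Suc i) + q^N * (q^(2*(N-i)) * TT q N i) - q^(2*(N-i))*q^(2*i) * TT q N i"
        unfolding TT_rec by (simp add: algebra_simps)
      show ?thesis using c by (simp only: a b)
    qed
  qed
  also have "\<dots> = q ^ (2 * N + 2) * (S0 q N - 1) + q ^ N * W q N - q ^ (2 * N) * S0 q N"
  proof -
    have h: "(\<Sum>i\<le>N. q ^ (2 * N + 2) * TT q N (Suc i)) = q ^ (2 * N + 2) * (S0 q N - 1)"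
      by (simp only: sum_distrib_left[symmetric] shift_1)
    show ?thesis
      by (simp only: sum.distrib sum_subtractf h) (simp add: W_def S0_def sum_distrib_left)
  qed
  finally show ?thesis by (simp add: algebra_simps)
qed

lemma W_closed: "W q (Suc N) = S0 q N * (q ^ (2 * N + 1) + q ^ (2 * N + 2) - q ^ (N + 1))"
proof (induction N)
  case 0
  have "TT q 1 1 = 0" by (rule TT_zero) simp
  then show ?case by (simp add: W_def S0_def TT0 power2_eq_square)
next
  case (Suc N)
  show ?case unfolding W_Suc[of q "Suc N"] Suc S0_Suc
    by (simp add: algebra_simps power_add)
qed

lemma S0_even: "S0 q (2 * r) = q ^ (2 * r\<^sup>2 - r)"
proof (induction r)
  case 0 then show ?case by (simp add: S0_def TT0)
next
  case (Suc r)
  have e: "2 * (Suc r)\<^sup>2 - Suc r = (2 * r\<^sup>2 - r) + 2 * r + (2 * r + 1)"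
    by (simp add: power2_eq_square algebra_simps)
  have "S0 q (2 * Suc r) = q ^ (2 * r + 1) * (q ^ (2 * r) * S0 q (2 * r))"
    using S0_Suc[of q "Suc (2 * r)"] S0_Suc[of q "2 * r"] by simp
  then have h: "S0 q (2 * Suc r) = q ^ (2 * r + 1) * (q ^ (2 * r) * q ^ (2 * r\<^sup>2 - r))"
    using Suc.IH by simp
  show ?case unfolding h e by (simp only: power_add mult_ac)
qed

lemma core_mult:
  assumes "r \<ge> 1"
  shows "q ^ (2 * r + 2) * (\<Sum>i\<le>2 * r + 1. (q ^ (2 * (r - i)) - 1) * TT q (2 * r + 1) i)
       = q ^ (2 * r + 2) * ((q ^ (2 * r) - 1) * (q ^ (2 * r\<^sup>2 - r - 1) - 1) + (q ^ (2 * r) - 1))"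
proof -
  define N where "N = 2 * r + 1"
  have t: "q ^ (2 * r + 2) * ((q ^ (2 * (r - i)) - 1) * TT q N i) = q ^ (2 * (N - i)) * TT q N i - q ^ (2 * r + 2) * TT q N i"
    if "i \<in> {..N}" for i
  proof (cases "i \<le> r")
    case True
    then have "2 * r + 2 + 2 * (r - i) = 2 * (N - i)" unfolding N_def by simp
    then have "q ^ (2 * r + 2) * q ^ (2 * (r - i)) = q ^ (2 * (N - i))" by (metis power_add)
    then show ?thesis by (simp add: algebra_simps)
  next
    case False
    then have "TT q N i = 0" unfolding N_def by (intro TT_zero) simp
    then show ?thesis by simp
  qed
  have "q ^ (2 * r + 2) * (\<Sum>i\<le>N. (q ^ (2 * (r - i)) - 1) * TT q N i) = W q N - q ^ (2 * r + 2) * S0 q N"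
  proof -
    have "(\<Sum>i\<le>N. q ^ (2 * r + 2) * ((q ^ (2 * (r - i)) - 1) * TT q N i)) = (\<Sum>i\<le>N. q ^ (2 * (N - i)) * TT q N i - q ^ (2 * r + 2) * TT q N i)"
      by (rule sum.cong[OF refl t])
    then show ?thesis by (simp only: sum_distrib_left sum_subtractf W_def S0_def)
  qed
  also have "\<dots> = q ^ (2 * r\<^sup>2 - r) * (q ^ (2 * (2 * r) + 1) + q ^ (2 * (2 * r) + 2) - q ^ (2 * r + 1)) - q ^ (2 * r + 2) * (q ^ (2 * r) * q ^ (2 * r\<^sup>2 - r))"
  proof -
    have N': "N = Suc (2 * r)" by (simp add: N_def)
    show ?thesis unfolding N' W_closed S0_Suc S0_even by (simp only: mult_ac)
  qed
  also have "\<dots> = q ^ (2 * r + 2) * ((q ^ (2 * r) - 1) * (q ^ (2 * r\<^sup>2 - r - 1) - 1) + (q ^ (2 * r) - 1))"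
  proof -
    obtain E where E: "2 * r\<^sup>2 - r = Suc E" using assms
      by (metis Suc_pred' diff_less le_less_trans less_numeral_extra(3) mult_2 not_less_zero zero_less_diff
           power2_eq_square nat_mult_less_cancel_disj add_gr_0 less_le_trans less_one not_less
           add_diff_cancel_left' diff_is_0_eq le_add1 le_square)
    have E': "2 * r\<^sup>2 - r - 1 = E" using E by simp
    have p4: "q ^ (2 * (2 * r)) = q ^ (2 * r) * q ^ (2 * r)" by (metis mult_2 power_add)
    show ?thesis unfolding E E' power_add p4 by (simp add: algebra_simps power2_eq_square)
  qed
  finally show ?thesis unfolding N_def .
qed

lemma gb_at0: "gauss_binom k n (0::complex) = (if k \<le> n then 1 else 0)"
proof (induction n arbitrary: k)
  case 0 then show ?case by (cases k) auto
next
  case (Suc n) then show ?case by (cases k) auto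
qed

lemma skew_eq: "hd_skew (2 * i) u v = (u * v) ^ (i * (i - 1)) * (\<Prod>j = 2..i. (u * v) ^ (2 * j - 1) - 1)"
  by (simp add: hd_skew_def Let_def)

lemma PP_q: "i \<ge> 1 \<Longrightarrow> PP q i = (q - 1) * (q ^ (i * (i - 1)) * (\<Prod>j = 2..i. q ^ (2 * j - 1) - 1))"
proof -
  assume i: "i \<ge> 1"
  have s: "{1..i} = insert 1 {2..i}" using i by auto
  have h: "(\<Prod>j = 1..i. q ^ (2 * j - 1) - 1) = (q - 1) * (\<Prod>j = 2..i. q ^ (2 * j - 1) - 1)"
    unfolding s by simp
  show ?thesis unfolding PP_def h by (simp only: mult_ac)
qed

lemma PP_skew: "i \<ge> 1 \<Longrightarrow> PP (u * v) i = (u * v - 1) * hd_skew (2 * i) u v"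
  unfolding skew_eq by (rule PP_q)

theorem proposition4p5:
  fixes u v :: complex and r :: nat
  assumes "r \<ge> 1"
    and "(u * v)\<^sup>2 \<noteq> 1"
  shows "(\<Sum>i = 1..r - 1. ((u * v) ^ (2 * r - 2 * i) - 1) / ((u * v)\<^sup>2 - 1)
            * hd_skew (2 * i) u v * hd_grass (2 * i) (2 * r + 1) u v)
         = (((u * v) ^ (2 * r) - 1) * ((u * v) ^ (2 * r\<^sup>2 - r - 1) - 1))
           / (((u * v)\<^sup>2 - 1) * (u * v - 1))"
proof (cases "u * v = 0")
  case True
  show ?thesis
  proof (cases "r = 1")
    case True
    then show ?thesis by simp
  next
    case False
    with assms(1) have r2: "r \<ge> 2" by simp
    have rr: "2 * r \<le> r * r" using r2 by (intro mult_le_mono1)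
    have "Suc r < 2 * (r * r)" using rr r2 by linarith
    then have pos: "2 * r\<^sup>2 - r - 1 > 0" by (simp add: power2_eq_square)
    have rhs: "(((u * v) ^ (2 * r) - 1) * ((u * v) ^ (2 * r\<^sup>2 - r - 1) - 1)) / (((u * v)\<^sup>2 - 1) * (u * v - 1)) = 1"
    proof -
      have a: "(0::complex) ^ (2 * r) = 0" using r2 by simp
      have b: "(0::complex) ^ (2 * r\<^sup>2 - r - 1) = 0" using pos by simp
      show ?thesis unfolding True a b by (simp add: power2_eq_square)
    qed
    have zero: "((u * v) ^ (2 * r - 2 * i) - 1) / ((u * v)\<^sup>2 - 1) * hd_skew (2 * i) u v * hd_grass (2 * i) (2 * r + 1) u v = 0"
      if "i \<in> {2..r - 1}" for i
    proof -
      from that have "i \<ge> 2" by simp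
      then have "i * (i - 1) > 0" by simp
      then show ?thesis using True by (simp add: skew_eq)
    qed
    have "{1..r - 1} = insert 1 {2..r - 1}" using r2 by auto
    then have "(\<Sum>i = 1..r - 1. ((u * v) ^ (2 * r - 2 * i) - 1) / ((u * v)\<^sup>2 - 1)
            * hd_skew (2 * i) u v * hd_grass (2 * i) (2 * r + 1) u v)
        = ((u * v) ^ (2 * r - 2 * 1) - 1) / ((u * v)\<^sup>2 - 1) * hd_skew (2 * 1) u v * hd_grass (2 * 1) (2 * r + 1) u v"
    proof -
      have z: "(\<Sum>i = 2..r - 1. ((u * v) ^ (2 * r - 2 * i) - 1) / ((u * v)\<^sup>2 - 1)
            * hd_skew (2 * i) u v * hd_grass (2 * i) (2 * r + 1) u v) = 0"
        using zero by (intro sum.neutral) blast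
      have n1: "(1::nat) \<notin> {2..r - 1}" by simp
      show ?thesis unfolding \<open>{1..r - 1} = insert 1 {2..r - 1}\<close> sum.insert[OF finite_atLeastAtMost n1] z by simp
    qed
    also have "\<dots> = 1"
    proof -
      have a: "(0::complex) ^ (2 * r - 2 * 1) = 0" using r2 by simp
      show ?thesis unfolding hd_grass_def True a using r2 by (simp add: hd_skew_def gb_at0 power2_eq_square)
    qed
    finally show ?thesis using rhs by simp
  qed
next
  case False
  define q where "q = u * v"
  define N where "N = 2 * r + 1"
  have q0: "q \<noteq> 0" using False q_def by simp
  have q1: "q - 1 \<noteq> 0" using assms(2) q_def by auto
  have q2: "q\<^sup>2 - 1 \<noteq> 0" using assms(2) q_def by auto
  define f where "f i = (q ^ (2 * (r - i)) - 1) * TT q N i" for i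
  have full: "(\<Sum>i\<le>N. f i) = (q ^ (2 * r) - 1) * (q ^ (2 * r\<^sup>2 - r - 1) - 1) + (q ^ (2 * r) - 1)"
    using core_mult[OF assms(1), of q] q0 unfolding f_def N_def by simp
  have "(\<Sum>i\<le>N. f i) = (\<Sum>i\<in>{..<r}. f i)"
  proof (rule sum.mono_neutral_right)
    show "finite {..N}" by simp
    show "{..<r} \<subseteq> {..N}" unfolding N_def by auto
    show "\<forall>i\<in>{..N} - {..<r}. f i = 0"
    proof
      fix i assume "i \<in> {..N} - {..<r}"
      then have "i \<ge> r" by simp
      show "f i = 0"
      proof (cases "i = r")
        case True then show ?thesis by (simp add: f_def)
      next
        case False
        with \<open>i \<ge> r\<close> have "N < 2 * i" unfolding N_def by simp
        then show ?thesis by (simp add: f_def TT_zero)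
      qed
    qed
  qed
  also have "{..<r} = insert 0 {1..r - 1}" using assms(1) by auto
  also have "(\<Sum>i\<in>insert 0 {1..r - 1}. f i) = (q ^ (2 * r) - 1) + (\<Sum>i = 1..r - 1. f i)"
    by (simp add: f_def TT0)
  finally have part: "(\<Sum>i = 1..r - 1. f i) = (q ^ (2 * r) - 1) * (q ^ (2 * r\<^sup>2 - r - 1) - 1)"
    using full by simp
  have trm: "(q ^ (2 * r - 2 * i) - 1) / (q\<^sup>2 - 1) * hd_skew (2 * i) u v * hd_grass (2 * i) (2 * r + 1) u v
      = f i / ((q\<^sup>2 - 1) * (q - 1))" if "i \<in> {1..r - 1}" for i
  proof -
    from that have i: "i \<ge> 1" by simp
    have "TT q N i = (q - 1) * hd_skew (2 * i) u v * hd_grass (2 * i) (2 * r + 1) u v"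
      unfolding TT_def q_def PP_skew[OF i] hd_grass_def N_def by simp
    moreover have e: "2 * r - 2 * i = 2 * (r - i)" by simp
    moreover have gen: "(A * (b * H)) / (a * b) = A / a * H" if "b \<noteq> 0" "a \<noteq> 0" for A a b H :: complex
      using that by (simp add: field_simps)
    ultimately show ?thesis unfolding f_def using gen[OF q1 q2] by (simp add: mult.assoc)
  qed
  have "(\<Sum>i = 1..r - 1. ((u * v) ^ (2 * r - 2 * i) - 1) / ((u * v)\<^sup>2 - 1)
            * hd_skew (2 * i) u v * hd_grass (2 * i) (2 * r + 1) u v)
      = (\<Sum>i = 1..r - 1. f i / ((q\<^sup>2 - 1) * (q - 1)))"
    unfolding q_def[symmetric] by (rule sum.cong[OF refl trm])
  also have "\<dots> = (\<Sum>i = 1..r - 1. f i) / ((q\<^sup>2 - 1) * (q - 1))"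
    by (simp add: sum_divide_distrib)
  finally show ?thesis unfolding part q_def .
qed

end
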